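(* For $n\ge1$, as polynomial identities in the variables $x_1,\dots,x_{n+1}$ (the ratios being polynomials): (1) for $\nu\in W^{n+1}$, $$\left.\frac{\det(Q_{\nu_i}(x_j))_{i,j=1}^{n+1}}{\det(x_j^{i-1})_{i,j=1}^{n+1}}\right|_{x_1=0}=\frac{(-1)^n}{\lambda_0^n}\sum_{k\in W^{n,n+1}(\nu)}\prod_{i=1}^n\hat\pi_{k_i}\,\frac{\det(\hat Q_{k_i}(x_{j+1}))_{i,j=1}^n}{\det(x_{j+1}^{i-1})_{i,j=1}^n};$$ (2) for $\nu\in W^n$, $$\frac{\det(\hat Q_{\nu_i}(x_j))_{i,j=1}^n}{\det(x_j^{i-1})_{i,j=1}^n}=\sum_{k\in W^{n,n}(\nu)}\prod_{i=1}^n\pi_{k_i}\,\frac{\det(Q_{k_i}(x_j))_{i,j=1}^n}{\det(x_j^{i-1})_{i,j=1}^n}.$$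
   Context: Let $\lambda_k=\lambda(k)>0$ ($k\ge0$) and $\mu_k=\mu(k)$ with $\mu_0=0$, $\mu_k>0$ ($k\ge1$) be the rates of a birth and death chain on $\mathbb N=\{0,1,\dots\}$ reflecting at $0$, with $\pi_0=1$, $\pi_k=\prod_{i=1}^k\lambda_{i-1}/\mu_i$. Dual rates: $\hat\lambda_k=\mu_{k+1}$, $\hat\mu_k=\lambda_k$; $\hat\pi_0=1$, $\hat\pi_k=\prod_{i=1}^k\mu_i/\lambda_i$. Polynomials $Q_n,\hat Q_n$ (degree $n$) are defined by $Q_{-1}=\hat Q_{-1}=0$, $Q_0=\hat Q_0=1$ and, for $n\ge0$, $-xQ_n(x)=\mu_nQ_{n-1}(x)-(\lambda_n+\mu_n)Q_n(x)+\lambda_nQ_{n+1}(x)$ and $-x\hat Q_n(x)=\lambda_n\hat Q_{n-1}(x)-(\mu_{n+1}+\lambda_n)\hat Q_n(x)+\mu_{n+1}\hat Q_{n+1}(x)$. $W^n=\{\nu\in\mathbb N^n:\nu_1<\dots<\nu_n\}$; for $\nu\in W^{n+1}$, $W^{n,n+1}(\nu)=\{k\in W^n:\nu_1\le k_1<\nu_2\le k_2<\dots\le k_n<\nu_{n+1}\}$; for $\nu\in W^n$, $W^{n,n}(\nu)=\{k\in W^n:k_1\le\nu_1<k_2\le\nu_2<\dots<k_n\le\nu_n\}$. $\det(x_j^{i-1})_{i,j=1}^n=\prod_{i<j}(x_j-x_i)$. *)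

theory Defs
  imports Complex_Main "Jordan_Normal_Form.Determinant"
begin

text \<open>Polynomials Q_n (as real functions) for birth rates lam and death rates mu,
  from the three-term recurrence with Q_{-1} = 0, Q_0 = 1.\<close>
fun Qp :: "(nat \<Rightarrow> real) \<Rightarrow> (nat \<Rightarrow> real) \<Rightarrow> nat \<Rightarrow> real \<Rightarrow> real" where
  "Qp lam mu 0 x = 1"
| "Qp lam mu (Suc 0) x = (lam 0 + mu 0 - x) / lam 0"
| "Qp lam mu (Suc (Suc n)) x =
     ((lam (Suc n) + mu (Suc n) - x) * Qp lam mu (Suc n) x - mu (Suc n) * Qp lam mu n x)
       / lam (Suc n)"

definition Qhat :: "(nat \<Rightarrow> real) \<Rightarrow> (nat \<Rightarrow> real) \<Rightarrow> nat \<Rightarrow> real \<Rightarrow> real" where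
  "Qhat lam mu = Qp (\<lambda>k. mu (Suc k)) lam"

definition piw :: "(nat \<Rightarrow> real) \<Rightarrow> (nat \<Rightarrow> real) \<Rightarrow> nat \<Rightarrow> real" where
  "piw lam mu k = (\<Prod>i=1..k. lam (i - 1) / mu i)"

definition pihat :: "(nat \<Rightarrow> real) \<Rightarrow> (nat \<Rightarrow> real) \<Rightarrow> nat \<Rightarrow> real" where
  "pihat lam mu k = (\<Prod>i=1..k. mu i / lam i)"

definition Wset :: "nat \<Rightarrow> nat list set" where
  "Wset n = {\<nu>. length \<nu> = n \<and> sorted_wrt (<) \<nu>}"

definition Winter :: "nat \<Rightarrow> nat list \<Rightarrow> nat list set" where
  "Winter n \<nu> = {k \<in> Wset n. \<forall>i<n. \<nu> ! i \<le> k ! i \<and> k ! i < \<nu> ! Suc i}"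

definition Wsame :: "nat \<Rightarrow> nat list \<Rightarrow> nat list set" where
  "Wsame n \<nu> = {k \<in> Wset n. (\<forall>i<n. k ! i \<le> \<nu> ! i) \<and> (\<forall>i. 0 < i \<and> i < n \<longrightarrow> \<nu> ! (i - 1) < k ! i)}"

definition fdet :: "(nat \<Rightarrow> real \<Rightarrow> real) \<Rightarrow> nat \<Rightarrow> nat list \<Rightarrow> (nat \<Rightarrow> real) \<Rightarrow> real" where
  "fdet f n \<nu> x = det (mat n n (\<lambda>(i, j). f (\<nu> ! i) (x j)))"

definition vdet :: "nat \<Rightarrow> (nat \<Rightarrow> real) \<Rightarrow> real" where
  "vdet n x = det (mat n n (\<lambda>(i, j). x j ^ i))"

end

theory Submission
  imports Defs "HOL-Library.FuncSet"
begin


lemma alg1: fixes lam1 lam0 mu1 ph pw x qa h :: real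
  assumes "lam1 \<noteq> 0" "lam0 \<noteq> 0" "ph*pw*mu1 = lam0"
  shows "((lam1+mu1-x)*qa - mu1*(qa + x*ph*h/lam0))/lam1 = qa - x*(ph*mu1/lam1)*(h+pw*qa)/lam0"
proof -
  have "x*ph*mu1*pw*qa/lam0 = x * qa" using assms by (simp add: field_simps)
  then show ?thesis using assms by (simp add: field_simps)
qed
lemma alg2: fixes lam1 lam0 mu2 ph pw x qa qb ha :: real
  assumes "mu2 \<noteq> 0" "ph \<noteq> 0" "ph*pw*lam1 = lam0" "x*ha = lam0*(qa-qb)/ph"
  shows "((mu2+lam1-x)*ha - lam1*(ha - pw*qa))/mu2 = ha + (pw*lam1/mu2)*qb"
proof -
  have "x*ha = (ph*pw*lam1)*(qa-qb)/ph" using assms(3,4) by simp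
  also have "\<dots> = pw*lam1*(qa-qb)" using assms(2) by simp
  finally have "x*ha = pw*lam1*(qa-qb)" .
  then show ?thesis using assms by (simp add: field_simps)
qed

context
  fixes lam mu :: "nat \<Rightarrow> real"
  assumes lam_pos: "\<And>k. lam k > 0"
    and mu0: "mu 0 = 0"
    and mu_pos: "\<And>k. k \<ge> 1 \<Longrightarrow> mu k > 0"
begin

lemma lam_nz[simp]: "lam k \<noteq> 0" using lam_pos[of k] by simp
lemma mu_nz[simp]: "mu (Suc k) \<noteq> 0" using mu_pos[of "Suc k"] by simp

lemma piw_Suc: "piw lam mu (Suc k) = piw lam mu k * lam k / mu (Suc k)"
  unfolding piw_def by (simp add: prod.nat_ivl_Suc')

lemma pihat_Suc: "pihat lam mu (Suc k) = pihat lam mu k * mu (Suc k) / lam (Suc k)"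
  unfolding pihat_def by (simp add: prod.nat_ivl_Suc')

lemma pp: "pihat lam mu k * piw lam mu k = lam 0 / lam k"
proof (induction k)
  case 0 then show ?case by (simp add: piw_def pihat_def)
next
  case (Suc k)
  have "pihat lam mu (Suc k) * piw lam mu (Suc k) = (pihat lam mu k * piw lam mu k) * (lam k / lam (Suc k))"
    by (simp add: piw_Suc pihat_Suc)
  also have "\<dots> = lam 0 / lam (Suc k)" using Suc by simp
  finally show ?case .
qed

lemma Qh0[simp]: "Qhat lam mu 0 x = 1" by (simp add: Qhat_def)
lemma Qh1: "Qhat lam mu (Suc 0) x = (mu 1 + lam 0 - x) / mu 1" by (simp add: Qhat_def)
lemma Qh2: "Qhat lam mu (Suc (Suc n)) x = ((mu (Suc (Suc n)) + lam (Suc n) - x) * Qhat lam mu (Suc n) x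
   - lam (Suc n) * Qhat lam mu n x) / mu (Suc (Suc n))" by (simp add: Qhat_def)

lemma joint: "Qp lam mu (Suc n) x = Qp lam mu n x - x * pihat lam mu n * Qhat lam mu n x / lam 0
   \<and> Qhat lam mu (Suc n) x = Qhat lam mu n x + piw lam mu (Suc n) * Qp lam mu (Suc n) x"
proof (induction n)
  case 0
  have "mu 1 \<noteq> 0" using mu_nz[of 0] by simp
  then show ?case using mu0 by (simp add: Qh1 piw_def pihat_def field_simps)
next
  case (Suc m)
  have pos: "pihat lam mu k > 0" for k unfolding pihat_def
    by (rule prod_pos) (auto intro!: divide_pos_pos mu_pos lam_pos)
  have e1: "(Qp lam mu) m x = (Qp lam mu) (Suc m) x + x * pihat lam mu m * (Qhat lam mu) m x / lam 0" using Suc by simp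
  have e2: "(Qhat lam mu) (Suc m) x = (Qhat lam mu) m x + piw lam mu (Suc m) * (Qp lam mu) (Suc m) x" using Suc by simp
  have e3: "pihat lam mu m * piw lam mu (Suc m) * mu (Suc m) = lam 0"
    using pp[of m] by (simp add: piw_Suc field_simps)
  have A: "(Qp lam mu) (Suc (Suc m)) x = (Qp lam mu) (Suc m) x - x * pihat lam mu (Suc m) * (Qhat lam mu) (Suc m) x / lam 0"
    unfolding pihat_Suc Qp.simps(3) e1 e2
    using alg1[OF lam_nz lam_nz e3, where x=x and qa="Qp lam mu (Suc m) x" and h="Qhat lam mu m x"] by simp
  have e4: "x * (Qhat lam mu) (Suc m) x = lam 0 * ((Qp lam mu) (Suc m) x - (Qp lam mu) (Suc (Suc m)) x) / pihat lam mu (Suc m)"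
    using A pos[of "Suc m"] by (simp add: field_simps)
  have e5: "pihat lam mu (Suc m) * piw lam mu (Suc m) * lam (Suc m) = lam 0"
    using pp[of "Suc m"] by (simp add: field_simps)
  have B: "(Qhat lam mu) (Suc (Suc m)) x = (Qhat lam mu) (Suc m) x + piw lam mu (Suc (Suc m)) * (Qp lam mu) (Suc (Suc m)) x"
    unfolding Qh2 piw_Suc[of "Suc m"]
    using alg2[OF mu_nz _ e5 e4] pos[of "Suc m"] e2 by simp
  show ?case using A B by simp
qed

end


lemma det_multilin:
  fixes c :: "nat \<Rightarrow> nat \<Rightarrow> 'a::comm_ring_1" and g :: "nat \<Rightarrow> nat \<Rightarrow> 'a"
  assumes fin: "\<And>i. i < n \<Longrightarrow> finite (S i)"
  shows "det (mat n n (\<lambda>(i,j). \<Sum>k\<in>S i. c i k * g k j))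
    = (\<Sum>\<kappa>\<in>PiE {0..<n} S. (\<Prod>i=0..<n. c i (\<kappa> i)) * det (mat n n (\<lambda>(i,j). g (\<kappa> i) j)))"
proof -
  let ?P = "{p. p permutes {0..<n}}"
  have "det (mat n n (\<lambda>(i,j). \<Sum>k\<in>S i. c i k * g k j))
     = (\<Sum>p\<in>?P. signof p * (\<Prod>i=0..<n. \<Sum>k\<in>S i. c i k * g k (p i)))"
    unfolding det_def'[OF mat_carrier]
    by (intro sum.cong refl arg_cong2[where f="(*)"] prod.cong)
       (auto dest: permutes_in_image)
  also have "\<dots> = (\<Sum>p\<in>?P. signof p * (\<Sum>\<kappa>\<in>PiE {0..<n} S. \<Prod>i=0..<n. c i (\<kappa> i) * g (\<kappa> i) (p i)))"
    by (subst prod_sum_PiE) (auto simp: fin)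
  also have "\<dots> = (\<Sum>p\<in>?P. \<Sum>\<kappa>\<in>PiE {0..<n} S. (\<Prod>i=0..<n. c i (\<kappa> i)) * (signof p * (\<Prod>i=0..<n. g (\<kappa> i) (p i))))"
    by (simp add: sum_distrib_left prod.distrib algebra_simps)
  also have "\<dots> = (\<Sum>\<kappa>\<in>PiE {0..<n} S. \<Sum>p\<in>?P. (\<Prod>i=0..<n. c i (\<kappa> i)) * (signof p * (\<Prod>i=0..<n. g (\<kappa> i) (p i))))"
    by (rule sum.swap)
  also have "\<dots> = (\<Sum>\<kappa>\<in>PiE {0..<n} S. (\<Prod>i=0..<n. c i (\<kappa> i)) * det (mat n n (\<lambda>(i,j). g (\<kappa> i) j)))"
    unfolding det_def'[OF mat_carrier] sum_distrib_left
    by (intro sum.cong refl arg_cong2[where f="(*)"] prod.cong)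
       (auto dest: permutes_in_image)
  finally show ?thesis .
qed

lemma det_colscale:
  fixes y :: "nat \<Rightarrow> 'a::comm_ring_1"
  shows "det (mat n n (\<lambda>(i,j). y j * a i j)) = (\<Prod>j=0..<n. y j) * det (mat n n (\<lambda>(i,j). a i j))"
proof -
  let ?P = "{p. p permutes {0..<n}}"
  have "det (mat n n (\<lambda>(i,j). y j * a i j)) = (\<Sum>p\<in>?P. signof p * ((\<Prod>i=0..<n. y (p i)) * (\<Prod>i=0..<n. a i (p i))))"
    unfolding det_def'[OF mat_carrier] prod.distrib[symmetric]
    by (intro sum.cong refl arg_cong2[where f="(*)"] prod.cong)
       (auto dest: permutes_in_image)
  also have "\<dots> = (\<Sum>p\<in>?P. (\<Prod>j=0..<n. y j) * (signof p * (\<Prod>i=0..<n. a i (p i))))"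
  proof (intro sum.cong refl)
    fix p assume "p \<in> ?P"
    then have "(\<Prod>i=0..<n. y (p i)) = (\<Prod>j=0..<n. y j)"
      using prod.permute[of p "{0..<n}" y] by (simp add: comp_def)
    then show "signof p * ((\<Prod>i=0..<n. y (p i)) * (\<Prod>i=0..<n. a i (p i))) = (\<Prod>j=0..<n. y j) * (signof p * (\<Prod>i=0..<n. a i (p i)))"
      by (simp add: algebra_simps)
  qed
  also have "\<dots> = (\<Prod>j=0..<n. y j) * det (mat n n (\<lambda>(i,j). a i j))"
    unfolding det_def'[OF mat_carrier] sum_distrib_left
    by (intro sum.cong refl arg_cong2[where f="(*)"] prod.cong)
       (auto dest: permutes_in_image)
  finally show ?thesis .
qed

lemma det_rowdiff:
  fixes f :: "nat \<Rightarrow> nat \<Rightarrow> 'a::comm_ring_1"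
  shows "det (mat n n (\<lambda>(i,j). f i j)) = det (mat n n (\<lambda>(i,j). if i = 0 then f 0 j else f i j - f (i-1) j))"
proof -
  define L where "L = mat n n (\<lambda>(i,l). if l \<le> i then (1::'a) else 0)"
  define D where "D = mat n n (\<lambda>(i,j). if i = 0 then f 0 j else f i j - f (i-1) j)"
  have L: "L \<in> carrier_mat n n" and D: "D \<in> carrier_mat n n" unfolding L_def D_def by auto
  have detL: "det L = 1"
  proof -
    have "det L = prod_list (diag_mat L)"
      by (rule det_lower_triangular[OF _ L]) (auto simp: L_def)
    also have "diag_mat L = replicate n 1"
      by (rule nth_equalityI) (auto simp: diag_mat_def L_def)
    finally show ?thesis by simp
  qed
  have tel: "(\<Sum>l\<in>{0..<n}. (if l \<le> i then 1 else 0) * (if l = 0 then f 0 j else f l j - f (l-1) j)) = f i j"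
    if "i < n" for i j
  proof -
    have "(\<Sum>l\<in>{0..<n}. (if l \<le> i then 1 else 0) * (if l = 0 then f 0 j else f l j - f (l-1) j))
       = (\<Sum>l\<in>{0..i}. (if l = 0 then f 0 j else f l j - f (l-1) j))"
      using that by (intro sum.mono_neutral_cong_right) auto
    also have "\<dots> = f i j"
      by (induction i) auto
    finally show ?thesis .
  qed
  have "mat n n (\<lambda>(i,j). f i j) = L * D"
    by (rule eq_matI) (auto simp: L_def D_def scalar_prod_def tel)
  then show ?thesis using det_mult[OF L D] detL D_def by simp
qed

lemma det_col0:
  fixes A :: "'a::comm_ring_1 mat"
  assumes A: "A \<in> carrier_mat (Suc n) (Suc n)" and z: "\<And>i. 0 < i \<Longrightarrow> i < Suc n \<Longrightarrow> A $$ (i,0) = 0"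
  shows "det A = A $$ (0,0) * det (mat n n (\<lambda>(i,j). A $$ (Suc i, Suc j)))"
proof -
  have "det A = (\<Sum>i<Suc n. A $$ (i,0) * cofactor A i 0)" by (rule laplace_expansion_column[OF A]) simp
  also have "\<dots> = A $$ (0,0) * cofactor A 0 0"
    by (subst sum.lessThan_Suc_shift) (auto simp: z)
  also have "mat_delete A 0 0 = mat n n (\<lambda>(i,j). A $$ (Suc i, Suc j))"
    using A by (intro eq_matI) (auto simp: mat_delete_def)
  then have "cofactor A 0 0 = det (mat n n (\<lambda>(i,j). A $$ (Suc i, Suc j)))" by (simp add: cofactor_def)
  finally show ?thesis .
qed



lemma sum_lists_PiE:
  assumes T: "\<And>k. k \<in> T \<longleftrightarrow> length k = n \<and> (\<forall>i<n. k!i \<in> S i)"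
  shows "sum G T = (\<Sum>\<kappa>\<in>PiE {0..<n} S. G (map \<kappa> [0..<n]))"
proof -
  have bij: "bij_betw (\<lambda>\<kappa>. map \<kappa> [0..<n]) (PiE {0..<n} S) T"
  proof (rule bij_betwI')
    fix a b assume a: "a \<in> PiE {0..<n} S" and b: "b \<in> PiE {0..<n} S"
    show "(map a [0..<n] = map b [0..<n]) = (a = b)"
    proof
      assume e: "map a [0..<n] = map b [0..<n]"
      show "a = b"
      proof (rule ext)
        fix i show "a i = b i"
        proof (cases "i < n")
          case True then show ?thesis using arg_cong[OF e, of "\<lambda>l. l!i"] by simp
        next
          case False then show ?thesis using a b by (auto simp: PiE_def extensional_def)
        qed
      qed
    qed simp
  next
    fix a assume "a \<in> PiE {0..<n} S" then show "map a [0..<n] \<in> T" using T by auto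
  next
    fix k assume k: "k \<in> T"
    show "\<exists>a\<in>PiE {0..<n} S. k = map a [0..<n]"
    proof (intro bexI)
      show "k = map (restrict (\<lambda>i. k!i) {0..<n}) [0..<n]"
        using k T by (intro nth_equalityI) auto
      show "restrict (\<lambda>i. k!i) {0..<n} \<in> PiE {0..<n} S" using k T by auto
    qed
  qed
  show ?thesis using sum.reindex_bij_betw[OF bij, of G] by simp
qed

lemma mat_cong_b: "(\<And>i j. i < n \<Longrightarrow> j < m \<Longrightarrow> f (i,j) = g (i,j)) \<Longrightarrow> mat n m f = mat n m g"
  by (rule eq_matI) auto

lemma fdet_map: "fdet f n (map \<kappa> [0..<n]) x = det (mat n n (\<lambda>(i,j). f (\<kappa> i) (x j)))"
  unfolding fdet_def by (intro arg_cong[where f=det] mat_cong_b) auto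



context
  fixes lam mu :: "nat \<Rightarrow> real"
  assumes lam_pos: "\<And>k. lam k > 0"
    and mu0: "mu 0 = 0"
    and mu_pos: "\<And>k. k \<ge> 1 \<Longrightarrow> mu k > 0"
begin

lemmas jnt = joint[of lam mu, OF lam_pos mu0 mu_pos]

lemma Qhat_diff: "a \<le> b \<Longrightarrow> Qhat lam mu b x - Qhat lam mu a x = (\<Sum>k\<in>{a<..b}. piw lam mu k * Qp lam mu k x)"
proof (induction b rule: dec_induct)
  case base then show ?case by simp
next
  case (step c)
  have "{a<..Suc c} = insert (Suc c) {a<..c}" using step by auto
  then show ?case using step jnt[of c x] by simp
qed

lemma Qhat_sum: "Qhat lam mu b x = (\<Sum>k\<in>{..b}. piw lam mu k * Qp lam mu k x)"
proof -
  have "{..b} = insert 0 {0<..b}" by auto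
  then show ?thesis using Qhat_diff[of 0 b x] by (simp add: piw_def Qhat_def)
qed

lemma Q_diff: "a \<le> b \<Longrightarrow> Qp lam mu b x - Qp lam mu a x = (\<Sum>k\<in>{a..<b}. (-1 / lam 0 * pihat lam mu k) * (x * Qhat lam mu k x))"
proof (induction b rule: dec_induct)
  case base then show ?case by simp
next
  case (step c)
  have "{a..<Suc c} = insert c {a..<c}" using step by auto
  moreover have "x * pihat lam mu c * Qhat lam mu c x / lam 0 = pihat lam mu c * (x * Qhat lam mu c x) / lam 0" by simp
  moreover note step.IH jnt[of c x]
  ultimately show ?case by (simp add: field_simps)
qed

lemma Q_at0: "Qp lam mu k 0 = 1"
  by (induction k) (use jnt in auto)


lemma sorted_nth: "sorted_wrt (<) (\<nu>::nat list) \<Longrightarrow> a < b \<Longrightarrow> b < length \<nu> \<Longrightarrow> \<nu>!a < \<nu>!b"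
  by (simp add: sorted_wrt_iff_nth_less)

lemma sorted_nth_le: "sorted_wrt (<) (\<nu>::nat list) \<Longrightarrow> a \<le> b \<Longrightarrow> b < length \<nu> \<Longrightarrow> \<nu>!a \<le> \<nu>!b"
  using sorted_nth[of \<nu> a b] by (cases "a = b") auto

lemma part2:
  assumes nu: "\<nu> \<in> Wset n"
  shows "fdet (Qhat lam mu) n \<nu> x / vdet n x
            = (\<Sum>k\<in>Wsame n \<nu>. (\<Prod>i<n. piw lam mu (k ! i)) * (fdet (Qp lam mu) n k x / vdet n x))"
proof -
  define S where "S i = (if i = 0 then {..\<nu>!0} else {\<nu>!(i-1)<..\<nu>!i})" for i
  have len: "length \<nu> = n" and srt: "sorted_wrt (<) \<nu>" using nu by (auto simp: Wset_def)
  have rows: "(if i = 0 then Qhat lam mu (\<nu>!0) (x j) else Qhat lam mu (\<nu>!i) (x j) - Qhat lam mu (\<nu>!(i-1)) (x j))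
     = (\<Sum>k\<in>S i. piw lam mu k * Qp lam mu k (x j))" if "i < n" for i j
  proof (cases "i = 0")
    case True then show ?thesis by (simp add: S_def Qhat_sum)
  next
    case False
    then have "\<nu>!(i-1) \<le> \<nu>!i" using sorted_nth_le[OF srt, of "i-1" i] that len by simp
    then show ?thesis using False by (simp add: S_def Qhat_diff)
  qed
  have "fdet (Qhat lam mu) n \<nu> x = det (mat n n (\<lambda>(i,j). Qhat lam mu (\<nu>!i) (x j)))"
    by (simp add: fdet_def)
  also have "\<dots> = det (mat n n (\<lambda>(i,j). if i = 0 then Qhat lam mu (\<nu>!0) (x j) else Qhat lam mu (\<nu>!i) (x j) - Qhat lam mu (\<nu>!(i-1)) (x j)))"
    using det_rowdiff[of n "\<lambda>i j. Qhat lam mu (\<nu>!i) (x j)"] by simp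
  also have "\<dots> = det (mat n n (\<lambda>(i,j). \<Sum>k\<in>S i. piw lam mu k * Qp lam mu k (x j)))"
    by (intro arg_cong[where f=det] mat_cong_b) (simp add: rows)
  also have "\<dots> = (\<Sum>\<kappa>\<in>PiE {0..<n} S. (\<Prod>i=0..<n. piw lam mu (\<kappa> i)) * det (mat n n (\<lambda>(i,j). Qp lam mu (\<kappa> i) (x j))))"
    using det_multilin[where S=S and c="\<lambda>i k. piw lam mu k" and g="\<lambda>k j. Qp lam mu k (x j)" and n=n]
    by (simp add: S_def)
  finally have L: "fdet (Qhat lam mu) n \<nu> x = \<dots>" .
  have T: "k \<in> Wsame n \<nu> \<longleftrightarrow> length k = n \<and> (\<forall>i<n. k!i \<in> S i)" for k
  proof
    assume "k \<in> Wsame n \<nu>" then show "length k = n \<and> (\<forall>i<n. k!i \<in> S i)"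
      by (auto simp: Wsame_def Wset_def S_def)
  next
    assume a: "length k = n \<and> (\<forall>i<n. k!i \<in> S i)"
    have "sorted_wrt (<) k" unfolding sorted_wrt_iff_nth_less
    proof (intro allI impI)
      fix i j assume ij: "i < j" "j < length k"
      have ki: "k!i \<in> S i" "k!j \<in> S j" using a ij by auto
      have "k!i \<le> \<nu>!i" using ki(1) by (cases "i = 0") (auto simp: S_def)
      also have "\<nu>!i \<le> \<nu>!(j-1)" using sorted_nth_le[OF srt, of i "j-1"] ij a len by simp
      also have "\<nu>!(j-1) < k!j" using ki(2) ij by (auto simp: S_def)
      finally show "k!i < k!j" .
    qed
    then show "k \<in> Wsame n \<nu>" using a by (auto simp: Wsame_def Wset_def S_def split: if_splits)
  qed
  have R: "(\<Sum>k\<in>Wsame n \<nu>. (\<Prod>i<n. piw lam mu (k ! i)) * (fdet (Qp lam mu) n k x / vdet n x))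
    = (\<Sum>\<kappa>\<in>PiE {0..<n} S. (\<Prod>i=0..<n. piw lam mu (\<kappa> i)) * det (mat n n (\<lambda>(i,j). Qp lam mu (\<kappa> i) (x j)))) / vdet n x"
    unfolding sum_lists_PiE[OF T] sum_divide_distrib fdet_map
    by (intro sum.cong refl) (simp add: atLeast0LessThan)
  show ?thesis unfolding L R ..
qed

lemma part1:
  assumes nu: "\<nu> \<in> Wset (n + 1)" and x0: "x 0 = 0" and inj: "inj_on x {0..n}"
  shows "fdet (Qp lam mu) (n + 1) \<nu> x / vdet (n + 1) x
            = (-1) ^ n / lam 0 ^ n *
              (\<Sum>k\<in>Winter n \<nu>. (\<Prod>i<n. pihat lam mu (k ! i)) *
                  (fdet (Qhat lam mu) n k (\<lambda>j. x (Suc j)) / vdet n (\<lambda>j. x (Suc j))))"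
proof -
  define y where "y j = x (Suc j)" for j
  define S where "S i = {\<nu>!i..<\<nu>!(Suc i)}" for i
  define P where "P = (\<Prod>j=0..<n. y j)"
  define c where "c k = -1 / lam 0 * pihat lam mu k" for k
  have len: "length \<nu> = Suc n" and srt: "sorted_wrt (<) \<nu>" using nu by (auto simp: Wset_def)
  have ynz: "y j \<noteq> 0" if "j < n" for j
  proof
    assume "y j = 0"
    then have "x (Suc j) = x 0" using x0 by (simp add: y_def)
    then show False using inj that by (auto dest: inj_onD)
  qed
  have Pnz: "P \<noteq> 0" unfolding P_def using ynz by simp
  have M: "fdet (Qp lam mu) (n + 1) \<nu> x = (\<Sum>\<kappa>\<in>PiE {0..<n} S. (\<Prod>i=0..<n. c (\<kappa> i)) * (P * det (mat n n (\<lambda>(i,j). Qhat lam mu (\<kappa> i) (y j)))))"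
  proof -
    let ?M = "mat (Suc n) (Suc n) (\<lambda>(i,j). if i = 0 then Qp lam mu (\<nu>!0) (x j) else Qp lam mu (\<nu>!i) (x j) - Qp lam mu (\<nu>!(i-1)) (x j))"
    have "fdet (Qp lam mu) (n + 1) \<nu> x = det (mat (Suc n) (Suc n) (\<lambda>(i,j). Qp lam mu (\<nu>!i) (x j)))"
      by (simp add: fdet_def)
    also have "\<dots> = det ?M"
      using det_rowdiff[of "Suc n" "\<lambda>i j. Qp lam mu (\<nu>!i) (x j)"] by simp
    also have "\<dots> = ?M $$ (0,0) * det (mat n n (\<lambda>(i,j). ?M $$ (Suc i, Suc j)))"
      by (rule det_col0) (auto simp: x0 Q_at0)
    also have "\<dots> = det (mat n n (\<lambda>(i,j). Qp lam mu (\<nu>!(Suc i)) (y j) - Qp lam mu (\<nu>!i) (y j)))"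
      using x0 Q_at0 by (simp, intro arg_cong[where f=det] mat_cong_b) (simp add: y_def)
    also have "\<dots> = det (mat n n (\<lambda>(i,j). \<Sum>k\<in>S i. c k * (y j * Qhat lam mu k (y j))))"
    proof (intro arg_cong[where f=det] mat_cong_b)
      fix i j assume "i < n" "j < n"
      then have "\<nu>!i \<le> \<nu>!(Suc i)" using sorted_nth_le[OF srt, of i "Suc i"] len by simp
      then show "(case (i, j) of (i, j) \<Rightarrow> Qp lam mu (\<nu>!(Suc i)) (y j) - Qp lam mu (\<nu>!i) (y j)) =
                 (case (i, j) of (i, j) \<Rightarrow> \<Sum>k\<in>S i. c k * (y j * Qhat lam mu k (y j)))"
        by (simp add: Q_diff S_def c_def)
    qed
    also have "\<dots> = (\<Sum>\<kappa>\<in>PiE {0..<n} S. (\<Prod>i=0..<n. c (\<kappa> i)) * det (mat n n (\<lambda>(i,j). y j * Qhat lam mu (\<kappa> i) (y j))))"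
      using det_multilin[where S=S and c="\<lambda>i k. c k" and g="\<lambda>k j. y j * Qhat lam mu k (y j)" and n=n]
      by (simp add: S_def)
    also have "\<dots> = (\<Sum>\<kappa>\<in>PiE {0..<n} S. (\<Prod>i=0..<n. c (\<kappa> i)) * (P * det (mat n n (\<lambda>(i,j). Qhat lam mu (\<kappa> i) (y j)))))"
      unfolding P_def using det_colscale[where y=y and n=n]
      by simp
    finally show ?thesis .
  qed
  have V: "vdet (n + 1) x = P * vdet n y"
  proof -
    let ?M = "mat (Suc n) (Suc n) (\<lambda>(i,j). x j ^ i)"
    have "vdet (n + 1) x = det ?M" by (simp add: vdet_def)
    also have "\<dots> = ?M $$ (0,0) * det (mat n n (\<lambda>(i,j). ?M $$ (Suc i, Suc j)))"
      by (rule det_col0) (auto simp: x0)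
    also have "\<dots> = det (mat n n (\<lambda>(i,j). y j * y j ^ i))"
      by (simp, intro arg_cong[where f=det] mat_cong_b) (simp add: y_def)
    also have "\<dots> = P * vdet n y"
      unfolding P_def vdet_def using det_colscale[where y=y and n=n and a="\<lambda>i j. y j ^ i"] by simp
    finally show ?thesis .
  qed
  have T: "k \<in> Winter n \<nu> \<longleftrightarrow> length k = n \<and> (\<forall>i<n. k!i \<in> S i)" for k
  proof
    assume "k \<in> Winter n \<nu>" then show "length k = n \<and> (\<forall>i<n. k!i \<in> S i)"
      by (auto simp: Winter_def Wset_def S_def)
  next
    assume a: "length k = n \<and> (\<forall>i<n. k!i \<in> S i)"
    have "sorted_wrt (<) k" unfolding sorted_wrt_iff_nth_less
    proof (intro allI impI)
      fix i j assume ij: "i < j" "j < length k"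
      have ki: "k!i \<in> S i" "k!j \<in> S j" using a ij by auto
      have "k!i < \<nu>!(Suc i)" using ki(1) by (auto simp: S_def)
      also have "\<nu>!(Suc i) \<le> \<nu>!j" using sorted_nth_le[OF srt, of "Suc i" j] ij a len by simp
      also have "\<nu>!j \<le> k!j" using ki(2) by (auto simp: S_def)
      finally show "k!i < k!j" .
    qed
    then show "k \<in> Winter n \<nu>" using a by (auto simp: Winter_def Wset_def S_def)
  qed
  have cprod: "(\<Prod>i=0..<n. c (\<kappa> i)) = (-1) ^ n / lam 0 ^ n * (\<Prod>i=0..<n. pihat lam mu (\<kappa> i))" for \<kappa>
  proof -
    have "(\<Prod>i=0..<n. c (\<kappa> i)) = (\<Prod>i=0..<n. (-1 / lam 0)) * (\<Prod>i=0..<n. pihat lam mu (\<kappa> i))"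
      unfolding c_def by (rule prod.distrib)
    then show ?thesis by (simp only: prod_constant card_atLeastLessThan power_divide) simp
  qed
  have yy: "(\<lambda>j. x (Suc j)) = y" by (simp add: y_def fun_eq_iff)
  show ?thesis
    unfolding M V yy sum_lists_PiE[OF T] fdet_map sum_divide_distrib sum_distrib_left
  proof (intro sum.cong refl)
    fix \<kappa> show "(\<Prod>i=0..<n. c (\<kappa> i)) * (P * det (mat n n (\<lambda>(i,j). Qhat lam mu (\<kappa> i) (y j)))) / (P * vdet n y)
      = (-1) ^ n / lam 0 ^ n * ((\<Prod>i<n. pihat lam mu (map \<kappa> [0..<n] ! i)) * (det (mat n n (\<lambda>(i,j). Qhat lam mu (\<kappa> i) (y j))) / vdet n y))"
      unfolding cprod using Pnz by (simp add: atLeast0LessThan)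
  qed
qed
end

theorem proposition7p1:
  fixes lam mu :: "nat \<Rightarrow> real" and n :: nat
  assumes lam_pos: "\<And>k. lam k > 0"
    and mu0: "mu 0 = 0"
    and mu_pos: "\<And>k. k \<ge> 1 \<Longrightarrow> mu k > 0"
    and n1: "n \<ge> 1"
  shows "(\<forall>\<nu> (x :: nat \<Rightarrow> real). \<nu> \<in> Wset (n + 1) \<and> x 0 = 0 \<and> inj_on x {0..n} \<longrightarrow>
            fdet (Qp lam mu) (n + 1) \<nu> x / vdet (n + 1) x
            = (-1) ^ n / lam 0 ^ n *
              (\<Sum>k\<in>Winter n \<nu>. (\<Prod>i<n. pihat lam mu (k ! i)) *
                  (fdet (Qhat lam mu) n k (\<lambda>j. x (Suc j)) / vdet n (\<lambda>j. x (Suc j)))))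
       \<and> (\<forall>\<nu> (x :: nat \<Rightarrow> real). \<nu> \<in> Wset n \<and> inj_on x {0..<n} \<longrightarrow>
            fdet (Qhat lam mu) n \<nu> x / vdet n x
            = (\<Sum>k\<in>Wsame n \<nu>. (\<Prod>i<n. piw lam mu (k ! i)) *
                  (fdet (Qp lam mu) n k x / vdet n x)))"
  using part1[of lam mu, OF lam_pos mu0 mu_pos] part2[of lam mu, OF lam_pos mu0 mu_pos] by blast

end
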